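(* Let $d\in\mathbb{N}$ and let $\mathcal{P}$ be a partition of $\mathbb{R}^{d}$. Suppose there exists $D\in(0,\infty)$ such that $\operatorname{diam}(X)\leq D$ for all $X\in\mathcal{P}$, and let $\epsilon\in(0,\infty)$ be such that $|\mathcal{N}_{\epsilon}(\vec{p})|\leq 2^{d}$ for all $\vec{p}\in\mathbb{R}^{d}$. Then $\epsilon\leq\frac{D}{2}$.
   Context: On $\mathbb{R}^d$ use $d_{max}(\vec{x},\vec{y})=\max_i|x_i-y_i|$; $\operatorname{diam}(X)=\sup\{d_{max}(\vec{x},\vec{y}):\vec{x},\vec{y}\in X\}$; $\overline{B}_{\epsilon}(\vec{p})=\{\vec{x}: d_{max}(\vec{x},\vec{p})\le\epsilon\}$; $\mathcal{N}_{\epsilon}(\vec{p})=\{X\in\mathcal{P}: X\cap\overline{B}_{\epsilon}(\vec{p})\neq\emptyset\}$. *)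

theory Defs
  imports "HOL-Analysis.Analysis"
begin

text \<open>Maximum (sup) metric on R^d, realised as real^'n with d = CARD('n).\<close>
definition dmax :: "real^'n \<Rightarrow> real^'n \<Rightarrow> real" where
  "dmax x y = Max (range (\<lambda>i. \<bar>x $ i - y $ i\<bar>))"

definition diam_max :: "(real^'n) set \<Rightarrow> ereal" where
  "diam_max X = (SUP p\<in>X \<times> X. ereal (dmax (fst p) (snd p)))"

definition closed_ball_max :: "real \<Rightarrow> real^'n \<Rightarrow> (real^'n) set" where
  "closed_ball_max e p = {x. dmax x p \<le> e}"

definition nbhd_parts :: "(real^'n) set set \<Rightarrow> real \<Rightarrow> real^'n \<Rightarrow> (real^'n) set set" where
  "nbhd_parts P e p = {X \<in> P. X \<inter> closed_ball_max e p \<noteq> {}}"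

definition is_partition :: "(real^'n) set set \<Rightarrow> bool" where
  "is_partition P \<longleftrightarrow> (\<forall>X\<in>P. X \<noteq> {}) \<and> \<Union>P = UNIV \<and>
     (\<forall>X\<in>P. \<forall>Y\<in>P. X \<noteq> Y \<longrightarrow> X \<inter> Y = {})"

end

theory Submission
  imports Defs
begin

lemma dmax_le_iff: "dmax x y \<le> e \<longleftrightarrow> (\<forall>i. \<bar>x $ i - y $ i\<bar> \<le> e)"
  unfolding dmax_def by (subst Max_le_iff) auto

lemma dmax_ge: "\<bar>x $ i - y $ i\<bar> \<le> dmax x y"
  unfolding dmax_def by (rule Max_ge) auto

lemma diam_bound:
  assumes "diam_max X \<le> ereal D" "x \<in> X" "y \<in> X"
  shows "dmax x y \<le> D"
proof -
  have "ereal (dmax x y) \<le> diam_max X"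
    unfolding diam_max_def using assms(2,3)
    by (intro SUP_upper2[of "(x,y)"]) auto
  then have "ereal (dmax x y) \<le> ereal D" using assms(1) by (rule order_trans)
  then show ?thesis by simp
qed

definition corner :: "real \<Rightarrow> real^'n \<Rightarrow> 'n set \<Rightarrow> real^'n" where
  "corner e p u = (\<chi> i. p $ i + (if i \<in> u then e else - e))"

lemma corners_fill:
  fixes P :: "(real^'n) set set" and D \<epsilon> :: real
  assumes part: "is_partition P"
    and diam: "\<forall>X\<in>P. diam_max X \<le> ereal D"
    and big: "D < 2 * \<epsilon>" and epos: "\<epsilon> > 0"
    and nb: "finite (nbhd_parts P \<epsilon> p)" "card (nbhd_parts P \<epsilon> p) \<le> 2 ^ CARD('n)"
    and X: "X \<in> nbhd_parts P \<epsilon> p"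
  shows "\<exists>u. corner \<epsilon> p u \<in> X"
proof -
  define g where "g u = (SOME X. X \<in> P \<and> corner \<epsilon> p u \<in> X)" for u
  have gP: "g u \<in> P \<and> corner \<epsilon> p u \<in> g u" for u
  proof -
    have "\<exists>X. X \<in> P \<and> corner \<epsilon> p u \<in> X" using part unfolding is_partition_def by blast
    then show ?thesis unfolding g_def by (rule someI_ex)
  qed
  have gn: "g u \<in> nbhd_parts P \<epsilon> p" for u
  proof -
    have "dmax (corner \<epsilon> p u) p \<le> \<epsilon>" unfolding dmax_le_iff corner_def using epos by auto
    then show ?thesis using gP[of u] unfolding nbhd_parts_def closed_ball_max_def by blast
  qed
  have inj: "inj g"
  proof
    fix u v assume eq: "g u = g v"
    show "u = v"
    proof (rule ccontr)
      assume "u \<noteq> v"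
      then obtain i where i: "(i \<in> u) \<noteq> (i \<in> v)" by blast
      have "dmax (corner \<epsilon> p u) (corner \<epsilon> p v) \<le> D"
        using diam_bound[of "g u" D] gP[of u] gP[of v] eq diam by metis
      moreover have "\<bar>corner \<epsilon> p u $ i - corner \<epsilon> p v $ i\<bar> = 2 * \<epsilon>"
        using i epos unfolding corner_def by auto
      ultimately show False using dmax_ge[of "corner \<epsilon> p u" i "corner \<epsilon> p v"] big by linarith
    qed
  qed
  have cu: "card (UNIV :: 'n set set) = 2 ^ CARD('n)"
    using card_Pow[of "UNIV :: 'n set"] by simp
  have "card (range g) = 2 ^ CARD('n)" using card_image[OF inj] cu by simp
  moreover have "range g \<subseteq> nbhd_parts P \<epsilon> p" using gn by blast
  ultimately have "range g = nbhd_parts P \<epsilon> p" using nb card_seteq by metis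
  with X obtain u where "X = g u" by blast
  then show ?thesis using gP by blast
qed

theorem mainTheorem8:
  fixes P :: "(real^'n) set set" and D \<epsilon> :: real
  assumes "is_partition P"
    and "D > 0" and "\<forall>X\<in>P. diam_max X \<le> ereal D"
    and "\<epsilon> > 0"
    and "\<forall>p. finite (nbhd_parts P \<epsilon> p) \<and> card (nbhd_parts P \<epsilon> p) \<le> 2 ^ CARD('n)"
  shows "\<epsilon> \<le> D / 2"
proof (rule ccontr)
  assume "\<not> \<epsilon> \<le> D / 2"
  then have big: "D < 2 * \<epsilon>" by simp
  define t where "t = (2 * \<epsilon> - D) / 2"
  have t: "0 < t" "t < 2 * \<epsilon> - D" "t \<le> 2 * \<epsilon>" using big assms(2) unfolding t_def by auto
  define pn where "pn n = (\<chi> (i::'n). real n * t)" for n :: nat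
  have step: "corner \<epsilon> (pn (Suc n)) UNIV \<in> X"
    if X: "X \<in> P" "corner \<epsilon> (pn n) UNIV \<in> X" for X n
  proof -
    let ?c = "corner \<epsilon> (pn n) UNIV"
    have "dmax ?c (pn (Suc n)) \<le> \<epsilon>"
      unfolding dmax_le_iff corner_def pn_def using t assms(4)
      by (auto simp: algebra_simps)
    then have "X \<in> nbhd_parts P \<epsilon> (pn (Suc n))"
      using X unfolding nbhd_parts_def closed_ball_max_def by blast
    then obtain u where u: "corner \<epsilon> (pn (Suc n)) u \<in> X"
      using corners_fill[OF assms(1) assms(3) big assms(4)] assms(5) by metis
    have "u = UNIV"
    proof (rule ccontr)
      assume "u \<noteq> UNIV"
      then obtain i where i: "i \<notin> u" by blast
      have "dmax ?c (corner \<epsilon> (pn (Suc n)) u) \<le> D"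
        using diam_bound[of X D] X u assms(3) by metis
      moreover have "\<bar>?c $ i - corner \<epsilon> (pn (Suc n)) u $ i\<bar> = 2 * \<epsilon> - t"
        using i t unfolding corner_def pn_def by (auto simp: algebra_simps)
      ultimately show False using dmax_ge[of ?c i "corner \<epsilon> (pn (Suc n)) u"] t by linarith
    qed
    then show ?thesis using u by simp
  qed
  obtain X0 where X0: "X0 \<in> P" "corner \<epsilon> (pn 0) UNIV \<in> X0"
    using assms(1) unfolding is_partition_def by blast
  have all: "corner \<epsilon> (pn n) UNIV \<in> X0" for n
    by (induction n) (use X0 step in auto)
  obtain n :: nat where n: "D < real n * t" using reals_Archimedean3[OF t(1)] by blast
  have "dmax (corner \<epsilon> (pn n) UNIV) (corner \<epsilon> (pn 0) UNIV) \<le> D"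
    using diam_bound[of X0 D] all X0 assms(3) by metis
  moreover have "\<bar>corner \<epsilon> (pn n) UNIV $ undefined - corner \<epsilon> (pn 0) UNIV $ undefined\<bar> = real n * t"
    using t unfolding corner_def pn_def by auto
  ultimately show False using dmax_ge[of "corner \<epsilon> (pn n) UNIV" undefined "corner \<epsilon> (pn 0) UNIV"] n by linarith
qed

end
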